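(* Let $w=(w(m))_{m\in2\mathbb{Z}}\in\ell^2(2\mathbb{Z})$, set $V(m)=m\,w(m)$, and for $n\in\mathbb{N}$, $d\in\{n,-n\}$ and $p\in\mathbb{N}$ let $$L(p,d)=\sum_{i_1,\dots,i_p\neq\pm n}\frac{|V(d-i_1)|}{|n^2-i_1^2|}\cdot\frac{|V(i_1-i_2)|}{|n^2-i_2^2|}\cdots\frac{|V(i_{p-1}-i_p)|}{|n^2-i_p^2|},$$ where all summation indices $i_1,\dots,i_p$ range over $n+2\mathbb{Z}$ with $i_\nu\neq\pm n$. Then there exists a sequence of positive numbers $\varepsilon_n\to0$ such that, for all sufficiently large $n$, $$L(s,n)\le\varepsilon_n^s\quad\text{and}\quad L(s,-n)\le\varepsilon_n^s\qquad\forall s\in\mathbb{N}.$$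
   Context: In the application, $w(m)$ are the Fourier coefficients of a $\pi$-periodic $L^2$ function $Q$, $Q(x)=\sum_{m\in2\mathbb{Z}}w(m)e^{imx}$, so that $V(m)$ is (up to a factor $i$) the $m$-th Fourier coefficient of $Q'$; but the statement only uses $w\in\ell^2(2\mathbb{Z})$. *)

theory Defs
  imports "HOL-Analysis.Analysis"
begin

definition idx :: "nat \<Rightarrow> int set" where
  "idx n = {i. even (i - int n) \<and> i \<noteq> int n \<and> i \<noteq> - int n}"

definition absV :: "(int \<Rightarrow> complex) \<Rightarrow> int \<Rightarrow> real" where
  "absV w m = \<bar>real_of_int m\<bar> * cmod (w m)"

fun chain_term :: "(int \<Rightarrow> complex) \<Rightarrow> nat \<Rightarrow> int \<Rightarrow> int list \<Rightarrow> real" where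
  "chain_term w n prev [] = 1"
| "chain_term w n prev (i # is) =
     absV w (prev - i) / \<bar>real_of_int (int n ^ 2 - i ^ 2)\<bar> * chain_term w n i is"

definition L :: "(int \<Rightarrow> complex) \<Rightarrow> nat \<Rightarrow> nat \<Rightarrow> int \<Rightarrow> ennreal" where
  "L w n p d = (\<Sum>\<^sub>\<infinity> is \<in> {is. length is = p \<and> set is \<subseteq> idx n}.
                  ennreal (chain_term w n d is))"

end

theory Submission
  imports Defs
begin

lemma summable_ennreal[simp]: "(f::'a \<Rightarrow> ennreal) summable_on S"
  by (simp add: nonneg_summable_on_complete)

lemma infsum_SUP_ennreal:
  fixes f :: "'a \<Rightarrow> ennreal"
  shows "infsum f A = (SUP F\<in>{F. finite F \<and> F \<subseteq> A}. sum f F)"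
  by (rule nonneg_infsum_complete) simp

lemma sum_le_infsum_ennreal:
  fixes f :: "'a \<Rightarrow> ennreal"
  assumes "finite F" "F \<subseteq> A"
  shows "sum f F \<le> infsum f A"
  unfolding infsum_SUP_ennreal[of f A] using assms by (intro SUP_upper) auto

lemma infsum_mono_set_ennreal:
  fixes f :: "'a \<Rightarrow> ennreal"
  assumes "A \<subseteq> B"
  shows "infsum f A \<le> infsum f B"
  unfolding infsum_SUP_ennreal[of f A] using assms
  by (intro SUP_least sum_le_infsum_ennreal) auto

lemma infsum_mono_ennreal:
  fixes f g :: "'a \<Rightarrow> ennreal"
  assumes "\<And>x. x \<in> A \<Longrightarrow> f x \<le> g x"
  shows "infsum f A \<le> infsum g A"
  by (rule infsum_mono) (use assms in auto)

lemma infsum_cmult_ennreal: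
  fixes f :: "'a \<Rightarrow> ennreal"
  shows "infsum (\<lambda>x. c * f x) A = c * infsum f A"
  unfolding infsum_SUP_ennreal SUP_mult_left_ennreal sum_distrib_left ..

lemma infsum_cmult_right_ennreal:
  fixes f :: "'a \<Rightarrow> ennreal"
  shows "infsum (\<lambda>x. f x * c) A = infsum f A * c"
  using infsum_cmult_ennreal[of c f A] by (simp add: mult.commute)

lemma infsum_add_ennreal:
  fixes f g :: "'a \<Rightarrow> ennreal"
  shows "infsum (\<lambda>x. f x + g x) A = infsum f A + infsum g A"
  by (rule infsum_add) auto

lemma infsum_Sigma_finite_ennreal:
  fixes f :: "'a \<times> 'b \<Rightarrow> ennreal"
  assumes "finite G"
  shows "infsum f (Sigma G B) = (\<Sum>x\<in>G. infsum (\<lambda>y. f (x, y)) (B x))"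
  using assms
proof (induction G rule: finite_induct)
  case empty
  then show ?case by simp
next
  case (insert x G)
  have "Sigma (insert x G) B = (Pair x ` B x) \<union> Sigma G B" by auto
  moreover have "Pair x ` B x \<inter> Sigma G B = {}" using insert by auto
  ultimately have "infsum f (Sigma (insert x G) B) = infsum f (Pair x ` B x) + infsum f (Sigma G B)"
    by (simp add: infsum_Un_disjoint)
  also have "infsum f (Pair x ` B x) = infsum (\<lambda>y. f (x, y)) (B x)"
    by (subst infsum_reindex) (auto simp: inj_on_def o_def)
  finally show ?case using insert by simp
qed

lemma infsum_Sigma_ennreal:
  fixes f :: "'a \<times> 'b \<Rightarrow> ennreal"
  shows "infsum f (Sigma A B) = infsum (\<lambda>x. infsum (\<lambda>y. f (x, y)) (B x)) A"
proof (rule antisym)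
  show "infsum f (Sigma A B) \<le> infsum (\<lambda>x. infsum (\<lambda>y. f (x, y)) (B x)) A"
    unfolding infsum_SUP_ennreal[of f]
  proof (intro SUP_least, clarify)
    fix F assume F: "finite F" "F \<subseteq> Sigma A B"
    define G where "G = fst ` F"
    define H where "H x = {y. (x, y) \<in> F}" for x
    have FG: "F = Sigma G H" unfolding G_def H_def by force
    have finH: "finite (H x)" for x
    proof -
      have "H x \<subseteq> snd ` F" unfolding H_def by force
      then show ?thesis using F(1) finite_subset by blast
    qed
    have "sum f F = (\<Sum>x\<in>G. \<Sum>y\<in>H x. f (x, y))"
      unfolding FG using F(1) finH by (subst sum.Sigma) (auto simp: G_def)
    also have "\<dots> \<le> (\<Sum>x\<in>G. infsum (\<lambda>y. f (x, y)) (B x))"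
      using F by (intro sum_mono sum_le_infsum_ennreal finH) (auto simp: H_def)
    also have "\<dots> \<le> infsum (\<lambda>x. infsum (\<lambda>y. f (x, y)) (B x)) A"
      using F by (intro sum_le_infsum_ennreal) (auto simp: G_def)
    finally show "sum f F \<le> infsum (\<lambda>x. infsum (\<lambda>y. f (x, y)) (B x)) A" .
  qed
next
  show "infsum (\<lambda>x. infsum (\<lambda>y. f (x, y)) (B x)) A \<le> infsum f (Sigma A B)"
    unfolding infsum_SUP_ennreal[of "\<lambda>x. infsum (\<lambda>y. f (x, y)) (B x)"]
  proof (intro SUP_least, clarify)
    fix G assume G: "finite G" "G \<subseteq> A"
    have "(\<Sum>x\<in>G. infsum (\<lambda>y. f (x, y)) (B x)) = infsum f (Sigma G B)"
      by (rule infsum_Sigma_finite_ennreal[OF G(1), symmetric])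
    also have "\<dots> \<le> infsum f (Sigma A B)"
      using G by (intro infsum_mono_set_ennreal) auto
    finally show "(\<Sum>x\<in>G. infsum (\<lambda>y. f (x, y)) (B x)) \<le> infsum f (Sigma A B)" .
  qed
qed

lemma infsum_swap_ennreal:
  fixes f :: "'a \<Rightarrow> 'b \<Rightarrow> ennreal"
  shows "infsum (\<lambda>x. infsum (\<lambda>y. f x y) B) A = infsum (\<lambda>y. infsum (\<lambda>x. f x y) A) B"
proof -
  have "infsum (\<lambda>x. infsum (\<lambda>y. f x y) B) A = infsum (\<lambda>(x,y). f x y) (A \<times> B)"
    using infsum_Sigma_ennreal[of "\<lambda>(x,y). f x y" A "\<lambda>_. B"] by simp
  also have "A \<times> B = prod.swap ` (B \<times> A)" by auto
  also have "infsum (\<lambda>(x,y). f x y) (prod.swap ` (B \<times> A)) = infsum (\<lambda>(y,x). f x y) (B \<times> A)"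
    by (subst infsum_reindex) (auto simp: o_def case_prod_beta split_beta')
  also have "\<dots> = infsum (\<lambda>y. infsum (\<lambda>x. f x y) A) B"
    using infsum_Sigma_ennreal[of "\<lambda>(y,x). f x y" B "\<lambda>_. A"] by simp
  finally show ?thesis .
qed

lemma CS_finite_ennreal:
  fixes f g :: "'a \<Rightarrow> ennreal"
  assumes "finite F"
  shows "(\<Sum>x\<in>F. f x * g x)\<^sup>2 \<le> (\<Sum>x\<in>F. (f x)\<^sup>2) * (\<Sum>x\<in>F. (g x)\<^sup>2)"
  using Cauchy_Schwarz_nn_integral[of f "count_space F" g] assms
  by (simp add: nn_integral_count_space_finite)

lemma CS_ennreal:
  fixes f g :: "'a \<Rightarrow> ennreal"
  shows "(infsum (\<lambda>x. f x * g x) A)\<^sup>2 \<le> infsum (\<lambda>x. (f x)\<^sup>2) A * infsum (\<lambda>x. (g x)\<^sup>2) A"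
proof -
  let ?S = "\<lambda>F. \<Sum>x\<in>F. f x * g x"
  let ?I = "{F. finite F \<and> F \<subseteq> A}"
  have "(infsum (\<lambda>x. f x * g x) A)\<^sup>2 = (SUP F\<in>?I. ?S F) * (SUP G\<in>?I. ?S G)"
    unfolding infsum_SUP_ennreal[of "\<lambda>x. f x * g x"] by (simp add: power2_eq_square)
  also have "\<dots> = (SUP F\<in>?I. SUP G\<in>?I. ?S G * ?S F)"
    by (simp only: SUP_mult_right_ennreal SUP_mult_left_ennreal)
  also have "\<dots> \<le> infsum (\<lambda>x. (f x)\<^sup>2) A * infsum (\<lambda>x. (g x)\<^sup>2) A"
  proof (intro SUP_least, clarify)
    fix F G assume F: "finite F" "F \<subseteq> A" and G: "finite G" "G \<subseteq> A"
    have "?S G * ?S F \<le> ?S (F \<union> G) * ?S (F \<union> G)"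
      using F G by (intro mult_mono sum_mono2) auto
    also have "\<dots> = (?S (F \<union> G))\<^sup>2" by (simp add: power2_eq_square)
    also have "\<dots> \<le> (\<Sum>x\<in>F\<union>G. (f x)\<^sup>2) * (\<Sum>x\<in>F\<union>G. (g x)\<^sup>2)"
      using F G by (intro CS_finite_ennreal) auto
    also have "\<dots> \<le> infsum (\<lambda>x. (f x)\<^sup>2) A * infsum (\<lambda>x. (g x)\<^sup>2) A"
      using F G by (intro mult_mono sum_le_infsum_ennreal) auto
    finally show "?S G * ?S F \<le> infsum (\<lambda>x. (f x)\<^sup>2) A * infsum (\<lambda>x. (g x)\<^sup>2) A" .
  qed
  finally show ?thesis .
qed

lemma infsum_reindex_le_ennreal:
  fixes g :: "'b \<Rightarrow> ennreal"
  assumes "inj_on h A" "h ` A \<subseteq> S"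
  shows "infsum (\<lambda>a. g (h a)) A \<le> infsum g S"
proof -
  have "infsum (\<lambda>a. g (h a)) A = infsum g (h ` A)"
    using assms(1) by (subst infsum_reindex) (auto simp: o_def)
  also have "\<dots> \<le> infsum g S" using assms(2) by (rule infsum_mono_set_ennreal)
  finally show ?thesis .
qed

lemma infsum_ennreal_real:
  fixes f :: "'a \<Rightarrow> real"
  assumes "f summable_on A" "\<And>x. x \<in> A \<Longrightarrow> f x \<ge> 0"
  shows "infsum (\<lambda>x. ennreal (f x)) A = ennreal (infsum f A)"
proof -
  have "\<And>F. finite F \<Longrightarrow> F \<subseteq> A \<Longrightarrow> sum (ennreal \<circ> f) F = ennreal (sum f F)"
    using assms(2) by (subst sum_ennreal[symmetric]) (auto simp: o_def)
  then have "ennreal (infsum f A) = infsum (ennreal \<circ> f) A"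
    by (simp add: infsum_comm_additive_general assms(1))
  then show ?thesis by (simp add: o_def)
qed

definition Ls :: "nat \<Rightarrow> nat \<Rightarrow> int list set" where
  "Ls n p = {is. length is = p \<and> set is \<subseteq> idx n}"

definition Kf :: "(int \<Rightarrow> complex) \<Rightarrow> nat \<Rightarrow> int \<Rightarrow> int \<Rightarrow> real" where
  "Kf w n a b = absV w (a - b) / \<bar>real_of_int (int n ^ 2 - b ^ 2)\<bar>"

definition G :: "(int \<Rightarrow> complex) \<Rightarrow> nat \<Rightarrow> nat \<Rightarrow> int \<Rightarrow> ennreal" where
  "G w n p a = infsum (\<lambda>is. ennreal (chain_term w n a is)) (Ls n p)"

lemma absV_nonneg: "absV w m \<ge> 0"
  by (simp add: absV_def)

lemma Kf_nonneg: "Kf w n a b \<ge> 0"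
  by (simp add: Kf_def absV_nonneg)

lemma chain_term_nonneg: "chain_term w n a is \<ge> 0"
  by (induction "is" arbitrary: a) (auto simp: absV_nonneg)

lemma L_eq_G: "L w n p d = G w n p d"
  by (simp add: L_def G_def Ls_def)

lemma G0: "G w n 0 a = 1"
proof -
  have "Ls n 0 = {[]}" by (auto simp: Ls_def)
  then show ?thesis by (simp add: G_def)
qed

lemma Gsuc: "G w n (Suc p) a = infsum (\<lambda>b. ennreal (Kf w n a b) * G w n p b) (idx n)"
proof -
  have img: "Ls n (Suc p) = (\<lambda>(b, is). b # is) ` (idx n \<times> Ls n p)"
  proof (intro equalityI subsetI)
    fix xs assume "xs \<in> Ls n (Suc p)"
    then obtain b ys where "xs = b # ys" "length ys = p" "b \<in> idx n" "set ys \<subseteq> idx n"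
      by (cases xs) (auto simp: Ls_def)
    then show "xs \<in> (\<lambda>(b, is). b # is) ` (idx n \<times> Ls n p)"
      by (auto simp: Ls_def image_iff)
  qed (auto simp: Ls_def)
  have inj: "inj_on (\<lambda>(b, is). b # is) (idx n \<times> Ls n p)"
    by (auto simp: inj_on_def)
  have "G w n (Suc p) a = infsum ((\<lambda>is. ennreal (chain_term w n a is)) \<circ> (\<lambda>(b, is). b # is)) (idx n \<times> Ls n p)"
    unfolding G_def img by (rule infsum_reindex[OF inj])
  also have "\<dots> = infsum (\<lambda>(b, is). ennreal (Kf w n a b) * ennreal (chain_term w n b is)) (idx n \<times> Ls n p)"
  proof (intro infsum_cong, clarify)
    fix b "is"
    have "chain_term w n a (b # is) = Kf w n a b * chain_term w n b is"
      by (simp add: Kf_def)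
    then show "((\<lambda>is. ennreal (chain_term w n a is)) \<circ> (\<lambda>(b, is). b # is)) (b, is) =
       ennreal (Kf w n a b) * ennreal (chain_term w n b is)"
      by (simp add: ennreal_mult Kf_nonneg chain_term_nonneg)
  qed
  also have "\<dots> = infsum (\<lambda>b. infsum (\<lambda>is. ennreal (Kf w n a b) * ennreal (chain_term w n b is)) (Ls n p)) (idx n)"
    using infsum_Sigma_ennreal[of "\<lambda>(b, is). ennreal (Kf w n a b) * ennreal (chain_term w n b is)" "idx n" "\<lambda>_. Ls n p"]
    by simp
  also have "\<dots> = infsum (\<lambda>b. ennreal (Kf w n a b) * G w n p b) (idx n)"
    by (simp add: infsum_cmult_ennreal G_def)
  finally show ?thesis .
qed

definition sg :: "nat \<Rightarrow> int \<Rightarrow> real" where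
  "sg n a = \<bar>real_of_int (\<bar>a\<bar> - int n)\<bar>"

definition tu :: "nat \<Rightarrow> int \<Rightarrow> real" where
  "tu n b = real_of_int \<bar>b\<bar> + real n"

lemma abs_sq_diff: "\<bar>real_of_int (int n ^ 2 - b ^ 2)\<bar> = sg n b * tu n b"
proof -
  have "int n ^ 2 - b ^ 2 = (int n - \<bar>b\<bar>) * (int n + \<bar>b\<bar>)"
    by (simp add: algebra_simps power2_eq_square flip: power2_abs)
  then have "\<bar>int n ^ 2 - b ^ 2\<bar> = \<bar>\<bar>b\<bar> - int n\<bar> * (\<bar>b\<bar> + int n)"
    by (simp add: abs_mult abs_minus_commute add.commute)
  then have "real_of_int \<bar>int n ^ 2 - b ^ 2\<bar> = real_of_int (\<bar>\<bar>b\<bar> - int n\<bar> * (\<bar>b\<bar> + int n))"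
    by simp
  then show ?thesis unfolding sg_def tu_def by simp
qed

lemma idx_sg_pos: "a \<in> idx n \<Longrightarrow> sg n a > 0"
  by (auto simp: idx_def sg_def)

lemma idx_tu_pos: "a \<in> idx n \<Longrightarrow> tu n a > 0"
  by (auto simp: idx_def tu_def)

lemma tu_nonneg: "tu n a \<ge> 0" by (simp add: tu_def)
lemma sg_nonneg: "sg n a \<ge> 0" by (simp add: sg_def)

definition Mf where "Mf w n a b = absV w (a - b) / (sg n a * tu n b)"
definition Hf where "Hf w n p a = ennreal (1 / sg n a) * G w n p a"
definition Sf where "Sf w n p = infsum (\<lambda>a. (Hf w n p a)\<^sup>2) (idx n)"
definition Df where "Df w n = infsum (\<lambda>a. infsum (\<lambda>b. ennreal ((Mf w n a b)\<^sup>2)) (idx n)) (idx n)"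
definition Yf where "Yf n = infsum (\<lambda>a. ennreal (1 / sg n a ^ 2)) (idx n)"
definition Xf where "Xf w n d = infsum (\<lambda>b. ennreal ((absV w (d - b) / tu n b)\<^sup>2)) (idx n)"

lemma Mf_nonneg: "Mf w n a b \<ge> 0"
  by (simp add: Mf_def absV_nonneg sg_nonneg tu_nonneg)

lemma Hf_suc: "Hf w n (Suc p) a = infsum (\<lambda>b. ennreal (Mf w n a b) * Hf w n p b) (idx n)"
proof -
  have "Hf w n (Suc p) a = infsum (\<lambda>b. ennreal (1 / sg n a) * (ennreal (Kf w n a b) * G w n p b)) (idx n)"
    unfolding Hf_def Gsuc infsum_cmult_ennreal ..
  also have "\<dots> = infsum (\<lambda>b. ennreal (Mf w n a b) * Hf w n p b) (idx n)"
  proof (intro infsum_cong)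
    fix b
    have "(1 / sg n a) * Kf w n a b = Mf w n a b * (1 / sg n b)"
      unfolding Kf_def Mf_def abs_sq_diff by simp
    then have "ennreal (1 / sg n a) * ennreal (Kf w n a b) = ennreal (Mf w n a b) * ennreal (1 / sg n b)"
      by (simp add: ennreal_mult[symmetric] sg_nonneg Kf_nonneg Mf_nonneg)
    then show "ennreal (1 / sg n a) * (ennreal (Kf w n a b) * G w n p b) = ennreal (Mf w n a b) * Hf w n p b"
      unfolding Hf_def by (metis mult.assoc)
  qed
  finally show ?thesis .
qed

lemma Sf_bound: "Sf w n p \<le> Df w n ^ p * Yf n"
proof (induction p)
  case 0
  then show ?case
    by (simp add: Sf_def Yf_def Hf_def G0 ennreal_power sg_nonneg power_divide)
next
  case (Suc p)
  have "Sf w n (Suc p) \<le> infsum (\<lambda>a. infsum (\<lambda>b. ennreal ((Mf w n a b)\<^sup>2)) (idx n) * Sf w n p) (idx n)"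
    unfolding Sf_def
  proof (intro infsum_mono_ennreal)
    fix a
    have "(Hf w n (Suc p) a)\<^sup>2 \<le> infsum (\<lambda>b. (ennreal (Mf w n a b))\<^sup>2) (idx n) * infsum (\<lambda>b. (Hf w n p b)\<^sup>2) (idx n)"
      unfolding Hf_suc by (rule CS_ennreal)
    then show "(Hf w n (Suc p) a)\<^sup>2 \<le> infsum (\<lambda>b. ennreal ((Mf w n a b)\<^sup>2)) (idx n) * infsum (\<lambda>b. (Hf w n p b)\<^sup>2) (idx n)"
      by (simp add: ennreal_power Mf_nonneg)
  qed
  also have "\<dots> = Df w n * Sf w n p"
    unfolding infsum_cmult_right_ennreal Df_def ..
  also have "\<dots> \<le> Df w n * (Df w n ^ p * Yf n)"
    using Suc by (intro mult_left_mono) auto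
  finally show ?case by (simp add: mult.assoc)
qed

lemma G_final: "(G w n (Suc p) d)\<^sup>2 \<le> Xf w n d * (Df w n ^ p * Yf n)"
proof -
  have "G w n (Suc p) d = infsum (\<lambda>b. ennreal (absV w (d - b) / tu n b) * Hf w n p b) (idx n)"
    unfolding Gsuc
  proof (intro infsum_cong)
    fix b
    have "Kf w n d b = (absV w (d - b) / tu n b) * (1 / sg n b)"
      unfolding Kf_def abs_sq_diff by simp
    then have "ennreal (Kf w n d b) = ennreal (absV w (d - b) / tu n b) * ennreal (1 / sg n b)"
      by (simp add: ennreal_mult[symmetric] sg_nonneg tu_nonneg absV_nonneg)
    then show "ennreal (Kf w n d b) * G w n p b = ennreal (absV w (d - b) / tu n b) * Hf w n p b"
      unfolding Hf_def by (metis mult.assoc)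
  qed
  then have "(G w n (Suc p) d)\<^sup>2 \<le> infsum (\<lambda>b. (ennreal (absV w (d - b) / tu n b))\<^sup>2) (idx n) * Sf w n p"
    unfolding Sf_def by (simp only: CS_ennreal)
  also have "\<dots> = Xf w n d * Sf w n p"
    by (simp add: Xf_def ennreal_power absV_nonneg tu_nonneg)
  also have "\<dots> \<le> Xf w n d * (Df w n ^ p * Yf n)"
    by (intro mult_left_mono Sf_bound) auto
  finally show ?thesis .
qed

lemma realA:
  fixes x c t nn R :: real
  assumes "0 < nn" "nn \<le> t" "\<bar>x\<bar> \<le> R"
  shows "(\<bar>x\<bar> * c / t)\<^sup>2 \<le> R\<^sup>2 / nn\<^sup>2 * c\<^sup>2"
proof -
  have "x\<^sup>2 \<le> R\<^sup>2" using assms(3) by (metis abs_ge_zero abs_le_square_iff abs_of_nonneg order_trans)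
  moreover have "nn\<^sup>2 \<le> t\<^sup>2" using assms by (intro power_mono) auto
  ultimately have "x\<^sup>2 / t\<^sup>2 \<le> R\<^sup>2 / nn\<^sup>2"
    using assms by (intro frac_le) auto
  then have "x\<^sup>2 / t\<^sup>2 * c\<^sup>2 \<le> R\<^sup>2 / nn\<^sup>2 * c\<^sup>2" by (intro mult_right_mono) auto
  then show ?thesis by (simp add: power_divide power_mult_distrib)
qed

lemma realB:
  fixes x c t :: real
  assumes "0 < t" "\<bar>x\<bar> \<le> t"
  shows "(\<bar>x\<bar> * c / t)\<^sup>2 \<le> c\<^sup>2"
proof -
  have "x\<^sup>2 \<le> t\<^sup>2" using assms by (metis abs_le_square_iff abs_of_pos)
  then have "x\<^sup>2 / t\<^sup>2 \<le> 1" using assms by simp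
  then have "x\<^sup>2 / t\<^sup>2 * c\<^sup>2 \<le> 1 * c\<^sup>2" by (intro mult_right_mono) auto
  then show ?thesis by (simp add: power_divide power_mult_distrib)
qed

lemma realC:
  fixes x c s t nn R :: real
  assumes "0 < s" "0 < nn" "nn \<le> t" "\<bar>x\<bar> \<le> R"
  shows "(\<bar>x\<bar> * c / (s * t))\<^sup>2 \<le> R\<^sup>2 / nn\<^sup>2 * (1 / s\<^sup>2 * c\<^sup>2)"
proof -
  have "(\<bar>x\<bar> * c / (s * t))\<^sup>2 = (\<bar>x\<bar> * (c / s) / t)\<^sup>2" by (simp add: field_simps)
  also have "\<dots> \<le> R\<^sup>2 / nn\<^sup>2 * (c / s)\<^sup>2" by (rule realA[OF assms(2-4)])
  also have "\<dots> = R\<^sup>2 / nn\<^sup>2 * (1 / s\<^sup>2 * c\<^sup>2)" by (simp add: power_divide)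
  finally show ?thesis .
qed

lemma realD:
  fixes x c s t :: real
  assumes "0 < s" "0 < t" "\<bar>x\<bar> \<le> s + t"
  shows "(\<bar>x\<bar> * c / (s * t))\<^sup>2 \<le> 2 * (1 / t\<^sup>2 * c\<^sup>2) + 2 * (1 / s\<^sup>2 * c\<^sup>2)"
proof -
  have "x\<^sup>2 \<le> (s + t)\<^sup>2" using assms by (metis abs_le_square_iff abs_of_pos add_pos_pos)
  also have "\<dots> \<le> 2 * s\<^sup>2 + 2 * t\<^sup>2" using zero_le_power2[of "s - t"] by (simp add: power2_eq_square algebra_simps)
  finally have "x\<^sup>2 \<le> 2 * s\<^sup>2 + 2 * t\<^sup>2" .
  then have "x\<^sup>2 / (s * t)\<^sup>2 \<le> (2 * s\<^sup>2 + 2 * t\<^sup>2) / (s * t)\<^sup>2"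
    using assms by (intro divide_right_mono) auto
  also have "\<dots> = 2 / t\<^sup>2 + 2 / s\<^sup>2" using assms by (simp add: field_simps power2_eq_square)
  finally have "x\<^sup>2 / (s * t)\<^sup>2 * c\<^sup>2 \<le> (2 / t\<^sup>2 + 2 / s\<^sup>2) * c\<^sup>2" by (intro mult_right_mono) auto
  then show ?thesis by (simp add: power_divide power_mult_distrib algebra_simps)
qed

definition Zc :: ennreal where
  "Zc = infsum (\<lambda>k::int. ennreal (1 / (real_of_int k)\<^sup>2)) UNIV"

lemma infsum_Un_le_ennreal:
  fixes f :: "'a \<Rightarrow> ennreal"
  shows "infsum f (A \<union> B) \<le> infsum f A + infsum f B"
proof -
  have "infsum f (A \<union> B) = infsum f (A \<union> (B - A))" by simp
  also have "\<dots> = infsum f A + infsum f (B - A)"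
    by (rule infsum_Un_disjoint) auto
  also have "\<dots> \<le> infsum f A + infsum f B"
    by (intro add_left_mono infsum_mono_set_ennreal) auto
  finally show ?thesis .
qed

lemma Zc_finite: "Zc < \<infinity>"
proof -
  let ?g = "\<lambda>k::int. ennreal (1 / (real_of_int k)\<^sup>2)"
  have sm: "(\<lambda>j::nat. 1 / (real j)\<^sup>2) summable_on UNIV"
    using inverse_power_summable[of 2, where 'a=real]
    by (subst summable_on_UNIV_nonneg_real_iff) (auto simp: divide_inverse)
  have nat_sum: "infsum (\<lambda>j::nat. ennreal (1 / (real j)\<^sup>2)) UNIV < \<infinity>"
    by (subst infsum_ennreal_real[OF sm]) auto
  have U: "(UNIV :: int set) = range int \<union> range (\<lambda>j. - int j)"
  proof (intro equalityI subsetI)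
    fix x :: int assume "x \<in> UNIV"
    show "x \<in> range int \<union> range (\<lambda>j. - int j)"
    proof (cases "x \<ge> 0")
      case True
      then have "x = int (nat x)" by simp
      then show ?thesis by blast
    next
      case False
      then have "x = - int (nat (- x))" by simp
      then show ?thesis by blast
    qed
  qed simp
  have "Zc \<le> infsum ?g (range int) + infsum ?g (range (\<lambda>j. - int j))"
    unfolding Zc_def U by (rule infsum_Un_le_ennreal)
  also have "infsum ?g (range int) = infsum (\<lambda>j::nat. ennreal (1 / (real j)\<^sup>2)) UNIV"
    by (subst infsum_reindex) (auto simp: o_def)
  also have "infsum ?g (range (\<lambda>j. - int j)) = infsum (\<lambda>j::nat. ennreal (1 / (real j)\<^sup>2)) UNIV"
    by (subst infsum_reindex) (auto simp: o_def inj_on_def)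
  finally show ?thesis using nat_sum by (simp add: ennreal_add_less_top order.strict_trans1)
qed

lemma inv_sq_mono:
  fixes x y :: real
  assumes "0 < y" "y \<le> x"
  shows "1 / x\<^sup>2 \<le> 1 / y\<^sup>2"
  using assms by (intro frac_le) (auto intro: power_mono)

lemma sg_inv_bound:
  assumes "a \<in> idx n"
  shows "1 / sg n a ^ 2 \<le> 1 / (real_of_int (a - int n))\<^sup>2 + 1 / (real_of_int (a + int n))\<^sup>2"
proof (cases "a \<ge> 0")
  case True
  then have "sg n a ^ 2 = (real_of_int (a - int n))\<^sup>2" by (simp add: sg_def)
  then show ?thesis by simp
next
  case False
  then have "sg n a = \<bar>real_of_int (a + int n)\<bar>" by (simp add: sg_def abs_minus_commute)
  then have "sg n a ^ 2 = (real_of_int (a + int n))\<^sup>2" by simp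
  then show ?thesis by simp
qed

lemma Yf_bound: "Yf n \<le> 2 * Zc"
proof -
  let ?g = "\<lambda>k::int. ennreal (1 / (real_of_int k)\<^sup>2)"
  have "Yf n \<le> infsum (\<lambda>a. ?g (a - int n) + ?g (a + int n)) (idx n)"
    unfolding Yf_def
  proof (intro infsum_mono_ennreal)
    fix a assume a: "a \<in> idx n"
    have eq: "?g (a - int n) + ?g (a + int n) = ennreal (1 / (real_of_int (a - int n))\<^sup>2 + 1 / (real_of_int (a + int n))\<^sup>2)"
      by (rule ennreal_plus[symmetric]) auto
    show "ennreal (1 / sg n a ^ 2) \<le> ?g (a - int n) + ?g (a + int n)"
      unfolding eq by (rule ennreal_leI[OF sg_inv_bound[OF a]])
  qed
  also have "\<dots> = infsum (\<lambda>a. ?g (a - int n)) (idx n) + infsum (\<lambda>a. ?g (a + int n)) (idx n)"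
    by (rule infsum_add_ennreal)
  also have "infsum (\<lambda>a. ?g (a - int n)) (idx n) \<le> Zc"
    unfolding Zc_def by (rule infsum_reindex_le_ennreal) (auto simp: inj_on_def)
  also have "infsum (\<lambda>a. ?g (a + int n)) (idx n) \<le> Zc"
    unfolding Zc_def by (rule infsum_reindex_le_ennreal) (auto simp: inj_on_def)
  finally show ?thesis by (simp add: mult_2 add_mono)
qed

definition Zt where "Zt n = infsum (\<lambda>b. ennreal (1 / tu n b ^ 2)) (idx n)"

lemma Zt_bound: "Zt n \<le> Zc"
proof -
  let ?g = "\<lambda>k::int. ennreal (1 / (real_of_int k)\<^sup>2)"
  have "Zt n \<le> infsum (\<lambda>b. ?g (b - int n)) (idx n)"
    unfolding Zt_def
  proof (intro infsum_mono_ennreal ennreal_leI)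
    fix b assume b: "b \<in> idx n"
    then have "b \<noteq> int n" by (auto simp: idx_def)
    then have p: "0 < \<bar>real_of_int (b - int n)\<bar>" by simp
    have "\<bar>real_of_int (b - int n)\<bar> \<le> tu n b" by (simp add: tu_def)
    then have "1 / tu n b ^ 2 \<le> 1 / \<bar>real_of_int (b - int n)\<bar> ^ 2"
      by (rule inv_sq_mono[OF p])
    then show "1 / tu n b ^ 2 \<le> 1 / (real_of_int (b - int n))\<^sup>2" by simp
  qed
  also have "\<dots> \<le> Zc"
    unfolding Zc_def by (rule infsum_reindex_le_ennreal) (auto simp: inj_on_def)
  finally show ?thesis .
qed

definition Ev :: "int set" where "Ev = {m. even m}"

lemma idx_even_diff: "a \<in> idx n \<Longrightarrow> b \<in> idx n \<Longrightarrow> even (a - b)"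
proof -
  assume "a \<in> idx n" "b \<in> idx n"
  then have "even ((a - int n) - (b - int n))" by (auto simp: idx_def)
  then show ?thesis by simp
qed

lemma idx_even_d: "b \<in> idx n \<Longrightarrow> d = int n \<or> d = - int n \<Longrightarrow> even (d - b)"
proof -
  assume "b \<in> idx n" "d = int n \<or> d = - int n"
  then have e: "even (b - int n)" by (auto simp: idx_def)
  then have "even (int n - b)" by (metis minus_diff_eq even_minus)
  moreover have "even (- int n - b)"
  proof -
    have "- int n - b = (int n - b) - 2 * int n" by simp
    then show ?thesis using \<open>even (int n - b)\<close> by simp
  qed
  ultimately show ?thesis using \<open>d = int n \<or> d = - int n\<close> by auto
qed

lemma reindex_left:
  fixes g :: "int \<Rightarrow> ennreal"
  assumes "\<And>b. b \<in> idx n \<Longrightarrow> even (c - b)"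
  shows "infsum (\<lambda>b. g (c - b)) (idx n) \<le> infsum g Ev"
  using assms by (intro infsum_reindex_le_ennreal) (auto simp: inj_on_def Ev_def)

lemma reindex_right:
  fixes g :: "int \<Rightarrow> ennreal"
  assumes "\<And>a. a \<in> idx n \<Longrightarrow> even (a - c)"
  shows "infsum (\<lambda>a. g (a - c)) (idx n) \<le> infsum g Ev"
  using assms by (intro infsum_reindex_le_ennreal) (auto simp: inj_on_def Ev_def)

definition W :: "(int \<Rightarrow> complex) \<Rightarrow> int \<Rightarrow> ennreal" where
  "W w m = ennreal ((cmod (w m))\<^sup>2)"
definition WR :: "(int \<Rightarrow> complex) \<Rightarrow> nat \<Rightarrow> int \<Rightarrow> ennreal" where
  "WR w R m = (if int R < \<bar>m\<bar> then W w m else 0)"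
definition NW where "NW w = infsum (W w) Ev"
definition TR where "TR w R = infsum (WR w R) Ev"

lemma X_point:
  assumes n: "n \<ge> 1" and b: "b \<in> idx n" and d: "d = int n \<or> d = - int n"
  shows "ennreal ((absV w (d - b) / tu n b)\<^sup>2)
         \<le> ennreal (real R ^ 2 / real n ^ 2) * W w (d - b) + WR w R (d - b)"
proof -
  let ?x = "real_of_int (d - b)" and ?c = "cmod (w (d - b))"
  have tpos: "0 < tu n b" using idx_tu_pos[OF b] .
  have nt: "real n \<le> tu n b" by (simp add: tu_def)
  have xt: "\<bar>?x\<bar> \<le> tu n b"
  proof -
    have "\<bar>d - b\<bar> \<le> \<bar>b\<bar> + int n" using d by auto
    then have "real_of_int \<bar>d - b\<bar> \<le> real_of_int (\<bar>b\<bar> + int n)" by (simp only: of_int_le_iff)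
    then show ?thesis by (simp add: tu_def)
  qed
  have av: "absV w (d - b) = \<bar>?x\<bar> * ?c" by (simp add: absV_def)
  show ?thesis
  proof (cases "\<bar>d - b\<bar> \<le> int R")
    case True
    then have "\<bar>?x\<bar> \<le> real R" by (metis of_int_abs of_int_le_iff of_int_of_nat_eq)
    then have "(\<bar>?x\<bar> * ?c / tu n b)\<^sup>2 \<le> (real R)\<^sup>2 / (real n)\<^sup>2 * ?c\<^sup>2"
      using n nt by (intro realA) auto
    then have "ennreal ((absV w (d - b) / tu n b)\<^sup>2) \<le> ennreal (real R ^ 2 / real n ^ 2) * W w (d - b)"
      unfolding av W_def by (simp add: ennreal_mult[symmetric] del: ennreal_mult ennreal_mult' ennreal_mult'' ennreal_mult_left_cong ennreal_mult_right_cong) 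
    then show ?thesis by (simp add: add_increasing2)
  next
    case False
    then have "WR w R (d - b) = W w (d - b)" by (simp add: WR_def)
    moreover have "(\<bar>?x\<bar> * ?c / tu n b)\<^sup>2 \<le> ?c\<^sup>2" using tpos xt by (rule realB)
    ultimately show ?thesis unfolding av W_def by (simp add: add_increasing ennreal_leI)
  qed
qed

lemma ennreal_2mult:
  fixes x y :: real
  assumes "0 \<le> x" "0 \<le> y"
  shows "ennreal (2 * (x * y)) = 2 * (ennreal x * ennreal y)"
proof -
  have "ennreal (2 * (x * y)) = ennreal 2 * ennreal (x * y)" by (rule ennreal_mult) (use assms in auto)
  also have "ennreal (x * y) = ennreal x * ennreal y" by (rule ennreal_mult) (use assms in auto)
  finally show ?thesis by simp
qed

lemma D_point:
  assumes n: "n \<ge> 1" and a: "a \<in> idx n" and b: "b \<in> idx n"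
  shows "ennreal ((Mf w n a b)\<^sup>2)
         \<le> ennreal (real R ^ 2 / real n ^ 2) * (ennreal (1 / sg n a ^ 2) * W w (a - b))
            + 2 * (ennreal (1 / tu n b ^ 2) * WR w R (a - b))
            + 2 * (ennreal (1 / sg n a ^ 2) * WR w R (a - b))"
proof -
  let ?x = "real_of_int (a - b)" and ?c = "cmod (w (a - b))"
  have tpos: "0 < tu n b" using idx_tu_pos[OF b] .
  have spos: "0 < sg n a" using idx_sg_pos[OF a] .
  have nt: "real n \<le> tu n b" by (simp add: tu_def)
  have xt: "\<bar>?x\<bar> \<le> sg n a + tu n b"
  proof -
    have "\<bar>a - b\<bar> \<le> \<bar>\<bar>a\<bar> - int n\<bar> + (\<bar>b\<bar> + int n)" by arith
    then have "real_of_int \<bar>a - b\<bar> \<le> real_of_int (\<bar>\<bar>a\<bar> - int n\<bar> + (\<bar>b\<bar> + int n))" by (simp only: of_int_le_iff)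
    then show ?thesis by (simp add: tu_def sg_def)
  qed
  have mv: "Mf w n a b = \<bar>?x\<bar> * ?c / (sg n a * tu n b)" by (simp add: Mf_def absV_def)
  have nn: "0 \<le> ennreal (real R ^ 2 / real n ^ 2) * (ennreal (1 / sg n a ^ 2) * W w (a - b))" by simp
  show ?thesis
  proof (cases "\<bar>a - b\<bar> \<le> int R")
    case True
    then have "\<bar>?x\<bar> \<le> real R" by (metis of_int_abs of_int_le_iff of_int_of_nat_eq)
    then have "(\<bar>?x\<bar> * ?c / (sg n a * tu n b))\<^sup>2 \<le> (real R)\<^sup>2 / (real n)\<^sup>2 * (1 / sg n a ^ 2 * ?c\<^sup>2)"
      using n nt spos by (intro realC) auto
    then have "ennreal ((Mf w n a b)\<^sup>2) \<le> ennreal (real R ^ 2 / real n ^ 2) * (ennreal (1 / sg n a ^ 2) * W w (a - b))"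
      unfolding mv W_def by (simp add: ennreal_mult[symmetric] del: ennreal_mult ennreal_mult' ennreal_mult'' ennreal_mult_left_cong ennreal_mult_right_cong) 
    then show ?thesis by (simp add: add_increasing2)
  next
    case False
    then have wr: "WR w R (a - b) = W w (a - b)" by (simp add: WR_def)
    have "(\<bar>?x\<bar> * ?c / (sg n a * tu n b))\<^sup>2 \<le> 2 * (1 / tu n b ^ 2 * ?c\<^sup>2) + 2 * (1 / sg n a ^ 2 * ?c\<^sup>2)"
      using spos tpos xt by (rule realD)
    then have "ennreal ((Mf w n a b)\<^sup>2) \<le> ennreal (2 * (1 / tu n b ^ 2 * ?c\<^sup>2) + 2 * (1 / sg n a ^ 2 * ?c\<^sup>2))"
      unfolding mv by (rule ennreal_leI)
    also have "\<dots> = 2 * (ennreal (1 / tu n b ^ 2) * W w (a - b)) + 2 * (ennreal (1 / sg n a ^ 2) * W w (a - b))"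
    proof -
      have e1: "ennreal (2 * (1 / tu n b ^ 2 * ?c\<^sup>2)) = 2 * (ennreal (1 / tu n b ^ 2) * ennreal (?c\<^sup>2))"
        by (rule ennreal_2mult) auto
      have e2: "ennreal (2 * (1 / sg n a ^ 2 * ?c\<^sup>2)) = 2 * (ennreal (1 / sg n a ^ 2) * ennreal (?c\<^sup>2))"
        by (rule ennreal_2mult) auto
      have "ennreal (2 * (1 / tu n b ^ 2 * ?c\<^sup>2) + 2 * (1 / sg n a ^ 2 * ?c\<^sup>2))
          = ennreal (2 * (1 / tu n b ^ 2 * ?c\<^sup>2)) + ennreal (2 * (1 / sg n a ^ 2 * ?c\<^sup>2))"
        by (rule ennreal_plus) auto
      then show ?thesis unfolding e1 e2 W_def .
    qed
    finally show ?thesis unfolding wr by (simp add: add_increasing add.assoc)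
  qed
qed

lemma X_bound:
  assumes n: "n \<ge> 1" and d: "d = int n \<or> d = - int n"
  shows "Xf w n d \<le> ennreal (real R ^ 2 / real n ^ 2) * NW w + TR w R"
proof -
  have "Xf w n d \<le> infsum (\<lambda>b. ennreal (real R ^ 2 / real n ^ 2) * W w (d - b) + WR w R (d - b)) (idx n)"
    unfolding Xf_def by (intro infsum_mono_ennreal X_point[OF n _ d])
  also have "\<dots> = ennreal (real R ^ 2 / real n ^ 2) * infsum (\<lambda>b. W w (d - b)) (idx n) + infsum (\<lambda>b. WR w R (d - b)) (idx n)"
    by (simp add: infsum_add_ennreal infsum_cmult_ennreal)
  also have "\<dots> \<le> ennreal (real R ^ 2 / real n ^ 2) * NW w + TR w R"
    unfolding NW_def TR_def
    by (intro add_mono mult_left_mono reindex_left idx_even_d[OF _ d]) auto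
  finally show ?thesis .
qed

lemma six_eq: "2*((Z::ennreal)*T) + 2*(2*Z*T) = 6*Z*T"
proof -
  have "2*(Z*T) + 2*(2*Z*T) = (2 + 2*2) * (Z*T)" by (simp only: distrib_right mult.assoc)
  also have "(2 + 2*2::ennreal) = 6" by simp
  finally show ?thesis by (simp add: mult.assoc)
qed

lemma D_bound:
  assumes n: "n \<ge> 1"
  shows "Df w n \<le> ennreal (real R ^ 2 / real n ^ 2) * (2 * Zc * NW w) + 6 * Zc * TR w R"
proof -
  let ?c = "ennreal (real R ^ 2 / real n ^ 2)"
  let ?ys = "\<lambda>a. ennreal (1 / sg n a ^ 2)" and ?yt = "\<lambda>b. ennreal (1 / tu n b ^ 2)"
  let ?J = "idx n"
  define S1 where "S1 = infsum (\<lambda>a. ?c * (?ys a * infsum (\<lambda>b. W w (a - b)) ?J)) ?J"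
  define S2 where "S2 = infsum (\<lambda>a. infsum (\<lambda>b. ?yt b * WR w R (a - b)) ?J) ?J"
  define S3 where "S3 = infsum (\<lambda>a. ?ys a * infsum (\<lambda>b. WR w R (a - b)) ?J) ?J"
  have "Df w n \<le> infsum (\<lambda>a. infsum (\<lambda>b. ?c * (?ys a * W w (a - b)) + 2 * (?yt b * WR w R (a - b)) + 2 * (?ys a * WR w R (a - b))) ?J) ?J"
    unfolding Df_def by (intro infsum_mono_ennreal D_point[OF n])
  also have "\<dots> = S1 + 2 * S2 + 2 * S3"
    unfolding S1_def S2_def S3_def by (simp add: infsum_add_ennreal infsum_cmult_ennreal)
  finally have D0: "Df w n \<le> S1 + 2 * S2 + 2 * S3" .
  have "S1 \<le> infsum (\<lambda>a. ?c * (?ys a * NW w)) ?J"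
    unfolding NW_def S1_def by (intro infsum_mono_ennreal mult_left_mono reindex_left idx_even_diff) auto
  also have "\<dots> = ?c * (Yf n * NW w)"
    by (simp add: infsum_cmult_ennreal infsum_cmult_right_ennreal Yf_def)
  also have "\<dots> \<le> ?c * (2 * Zc * NW w)"
    by (intro mult_left_mono mult_right_mono Yf_bound) auto
  finally have D1: "S1 \<le> ?c * (2 * Zc * NW w)" .
  have "S2 = infsum (\<lambda>b. ?yt b * infsum (\<lambda>a. WR w R (a - b)) ?J) ?J"
    unfolding S2_def by (subst infsum_swap_ennreal) (simp add: infsum_cmult_ennreal)
  also have "\<dots> \<le> infsum (\<lambda>b. ?yt b * TR w R) ?J"
    unfolding TR_def by (intro infsum_mono_ennreal mult_left_mono reindex_right idx_even_diff) auto
  also have "\<dots> = Zt n * TR w R" by (simp add: infsum_cmult_right_ennreal Zt_def)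
  also have "\<dots> \<le> Zc * TR w R" by (intro mult_right_mono Zt_bound) auto
  finally have D2: "S2 \<le> Zc * TR w R" .
  have "S3 \<le> infsum (\<lambda>a. ?ys a * TR w R) ?J"
    unfolding TR_def S3_def by (intro infsum_mono_ennreal mult_left_mono reindex_left idx_even_diff) auto
  also have "\<dots> = Yf n * TR w R" by (simp add: infsum_cmult_right_ennreal Yf_def)
  also have "\<dots> \<le> 2 * Zc * TR w R" by (intro mult_right_mono Yf_bound) auto
  finally have D3: "S3 \<le> 2 * Zc * TR w R" .
  have "Df w n \<le> ?c * (2 * Zc * NW w) + 2 * (Zc * TR w R) + 2 * (2 * Zc * TR w R)"
    using D0 D1 D2 D3 by (meson add_mono mult_left_mono order_trans zero_le)
  also have "\<dots> = ?c * (2 * Zc * NW w) + 6 * Zc * TR w R"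
    using six_eq[of Zc "TR w R"] by (simp add: add.assoc)
  finally show ?thesis .
qed

lemma tendsto_ennreal_0I:
  fixes Q :: "nat \<Rightarrow> ennreal"
  assumes "\<And>e. e > 0 \<Longrightarrow> eventually (\<lambda>n. Q n \<le> ennreal e) sequentially"
  shows "Q \<longlonglongrightarrow> 0"
proof (rule order_tendstoI)
  fix y :: ennreal assume "y < 0" then show "eventually (\<lambda>n. y < Q n) sequentially" by simp
next
  fix y :: ennreal assume y: "0 < y"
  obtain e where e: "e > 0" "ennreal e < y"
  proof (cases "y = \<infinity>")
    case True then show ?thesis using that[of 1] by simp
  next
    case False
    then obtain r where r: "y = ennreal r" "r \<ge> 0" by (cases y) auto
    then have "r > 0" using y by simp
    then show ?thesis using that[of "r/2"] r by (simp add: ennreal_lessI)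
  qed
  show "eventually (\<lambda>n. Q n < y) sequentially"
    using assms[OF e(1)] by eventually_elim (use e in auto)
qed

lemma to_zero:
  fixes Q :: "nat \<Rightarrow> ennreal" and T :: "nat \<Rightarrow> ennreal"
  assumes A: "A < \<infinity>" and B: "B < \<infinity>" and tail: "\<And>e. e > 0 \<Longrightarrow> \<exists>R. T R \<le> ennreal e"
    and bnd: "\<And>R n. n \<ge> 1 \<Longrightarrow> Q n \<le> ennreal (real R ^ 2 / real n ^ 2) * B + A * T R"
  shows "Q \<longlonglongrightarrow> 0"
proof (rule tendsto_ennreal_0I)
  fix e :: real assume e: "e > 0"
  obtain a where a: "A = ennreal a" "a \<ge> 0" using A by (cases A) auto
  obtain b where b: "B = ennreal b" "b \<ge> 0" using B by (cases B) auto
  obtain R where R: "T R \<le> ennreal (e / (2 * (a + 1)))"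
    using tail[of "e / (2 * (a + 1))"] e a by auto
  have "A * T R \<le> ennreal a * ennreal (e / (2 * (a + 1)))"
    unfolding a by (intro mult_left_mono R) auto
  also have "\<dots> = ennreal (a * (e / (2 * (a + 1))))" by (rule ennreal_mult[symmetric]) (use a e in auto)
  also have "\<dots> \<le> ennreal (e / 2)"
  proof (intro ennreal_leI)
    have "a * (e / (2 * (a + 1))) = (a / (a + 1)) * (e / 2)" using a by (simp add: field_simps)
    also have "\<dots> \<le> 1 * (e / 2)" using a e by (intro mult_right_mono) auto
    finally show "a * (e / (2 * (a + 1))) \<le> e / 2" by simp
  qed
  finally have AT: "A * T R \<le> ennreal (e / 2)" .
  have lim: "(\<lambda>n. real R ^ 2 * b / real n ^ 2) \<longlonglongrightarrow> 0"
  proof (rule tendsto_divide_0[OF tendsto_const])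
    have "filterlim (\<lambda>n. real n ^ 2) at_top sequentially"
      by (intro filterlim_pow_at_top filterlim_real_sequentially) auto
    then show "filterlim (\<lambda>n. real n ^ 2) at_infinity sequentially"
      by (rule filterlim_at_top_imp_at_infinity)
  qed
  have ev: "eventually (\<lambda>n. real R ^ 2 * b / real n ^ 2 < e / 2) sequentially"
    using order_tendstoD(2)[OF lim, of "e/2"] e by simp
  show "eventually (\<lambda>n. Q n \<le> ennreal e) sequentially"
    using ev eventually_ge_at_top[of 1]
  proof eventually_elim
    case (elim n)
    have "ennreal (real R ^ 2 / real n ^ 2) * B = ennreal (real R ^ 2 * b / real n ^ 2)"
      unfolding b using b by (simp add: ennreal_mult[symmetric])
    also have "\<dots> \<le> ennreal (e / 2)" using elim by (intro ennreal_leI) simp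
    finally have "Q n \<le> ennreal (e / 2) + ennreal (e / 2)"
      using bnd[OF elim(2), of R] AT by (meson add_mono order_trans)
    also have "\<dots> = ennreal e" using e by (simp flip: ennreal_plus)
    finally show ?case .
  qed
qed

lemma sq_le_ennreal:
  fixes x :: ennreal and a :: real
  assumes "0 \<le> a" "x\<^sup>2 \<le> ennreal (a\<^sup>2)"
  shows "x \<le> ennreal a"
proof (cases x)
  case (real t)
  then have "ennreal (t\<^sup>2) \<le> ennreal (a\<^sup>2)" using assms by (simp add: ennreal_power)
  then have "t\<^sup>2 \<le> a\<^sup>2" using assms(1) by (simp add: ennreal_le_iff)
  then have "t \<le> a" using assms(1) by (rule power2_le_imp_le)
  then show ?thesis using real by (simp add: ennreal_leI)
next
  case top
  then show ?thesis using assms by simp (metis ennreal_neq_top top_unique)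
qed

context
  fixes w :: "int \<Rightarrow> complex"
  assumes sw: "(\<lambda>m. (cmod (w m))\<^sup>2) summable_on {m. even m}"
begin

lemma NW_eq: "NW w = ennreal (infsum (\<lambda>m. (cmod (w m))\<^sup>2) Ev)"
  unfolding NW_def W_def Ev_def by (rule infsum_ennreal_real[OF sw]) auto

lemma NW_finite: "NW w < \<infinity>"
  by (simp add: NW_eq)

lemma tail: "e > 0 \<Longrightarrow> \<exists>R. TR w R \<le> ennreal e"
proof -
  assume e: "e > 0"
  let ?f = "\<lambda>m. (cmod (w m))\<^sup>2"
  have sE: "?f summable_on Ev" using sw by (simp add: Ev_def)
  obtain F where F: "finite F" "F \<subseteq> Ev" "dist (sum ?f F) (infsum ?f Ev) \<le> e"
    using infsum_finite_approximation[OF sE e] by blast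
  have sF: "?f summable_on F" using F(1) by simp
  have sD: "?f summable_on (Ev - F)" using summable_on_Diff[OF sE sF F(2)] .
  have "infsum ?f (Ev - F) = infsum ?f Ev - sum ?f F"
    using infsum_Diff[OF sE sF F(2)] F(1) by simp
  also have "\<dots> \<le> e" using F(3) by (simp add: dist_real_def)
  finally have le: "infsum ?f (Ev - F) \<le> e" .
  define R where "R = nat (Max (insert 0 (abs ` F)))"
  have RF: "\<bar>m\<bar> \<le> int R" if "m \<in> F" for m
  proof -
    have "\<bar>m\<bar> \<le> Max (insert 0 (abs ` F))" using F(1) that by (intro Max_ge) auto
    moreover have "0 \<le> Max (insert 0 (abs ` F))" using F(1) by (intro Max_ge) auto
    ultimately show ?thesis unfolding R_def by simp
  qed
  have "TR w R \<le> infsum (\<lambda>m. ennreal (?f m)) (Ev - F)"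
    unfolding TR_def
    by (rule infsum_mono_neutral) (auto simp: WR_def W_def dest: RF)
  also have "\<dots> = ennreal (infsum ?f (Ev - F))" by (rule infsum_ennreal_real[OF sD]) auto
  also have "\<dots> \<le> ennreal e" using le by (rule ennreal_leI)
  finally show ?thesis by blast
qed

lemma X_lim: "d = (\<lambda>n. int n) \<or> d = (\<lambda>n. - int n) \<Longrightarrow> (\<lambda>n. Xf w n (d n)) \<longlonglongrightarrow> 0"
proof -
  assume d: "d = (\<lambda>n. int n) \<or> d = (\<lambda>n. - int n)"
  show ?thesis
  proof (rule to_zero[where A=1 and B="NW w" and T="TR w"])
    show "NW w < \<infinity>" by (rule NW_finite)
    show "\<exists>R. TR w R \<le> ennreal e" if "e > 0" for e using tail that .
    fix R n :: nat assume "n \<ge> 1"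
    then show "Xf w n (d n) \<le> ennreal (real R ^ 2 / real n ^ 2) * NW w + 1 * TR w R"
      using X_bound[of n "d n" w R] d by auto
  qed simp
qed

lemma D_lim: "(\<lambda>n. Df w n) \<longlonglongrightarrow> 0"
proof (rule to_zero[where A="6 * Zc" and B="2 * Zc * NW w" and T="TR w"])
  show "6 * Zc < \<infinity>" using Zc_finite by (simp add: ennreal_mult_less_top)
  show "2 * Zc * NW w < \<infinity>" using Zc_finite NW_finite by (simp add: ennreal_mult_less_top)
  show "\<exists>R. TR w R \<le> ennreal e" if "e > 0" for e using tail that .
  fix R n :: nat assume "n \<ge> 1"
  then show "Df w n \<le> ennreal (real R ^ 2 / real n ^ 2) * (2 * Zc * NW w) + 6 * Zc * TR w R"
    by (rule D_bound)
qed

end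

lemma bound_d:
  assumes e: "e \<ge> 0" and C: "C \<ge> 1"
    and X: "Xf w n d \<le> ennreal e" and D: "Df w n \<le> ennreal e" and Y: "Yf n \<le> ennreal C"
  shows "L w n (Suc p) d \<le> ennreal (sqrt (C * e) ^ Suc p)"
proof (rule sq_le_ennreal)
  show "0 \<le> sqrt (C * e) ^ Suc p" using e C by simp
  have "(L w n (Suc p) d)\<^sup>2 \<le> Xf w n d * (Df w n ^ p * Yf n)"
    unfolding L_eq_G by (rule G_final)
  also have "\<dots> \<le> ennreal e * (ennreal e ^ p * ennreal C)"
    using X D Y by (intro mult_mono power_mono) auto
  also have "\<dots> = ennreal (e ^ Suc p * C)"
    using e C by (simp add: ennreal_power ennreal_mult mult.assoc)
  also have "\<dots> \<le> ennreal ((sqrt (C * e) ^ Suc p)\<^sup>2)"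
  proof (intro ennreal_leI)
    have "C ^ 1 \<le> C ^ Suc p" using C by (intro power_increasing) auto
    then have "e ^ Suc p * C \<le> e ^ Suc p * C ^ Suc p" using e by (intro mult_left_mono) auto
    also have "\<dots> = (sqrt (C * e) ^ Suc p)\<^sup>2"
    proof -
      have "(sqrt (C * e) ^ Suc p)\<^sup>2 = (sqrt (C * e) ^ 2) ^ Suc p" by (metis power_mult mult.commute)
      also have "sqrt (C * e) ^ 2 = C * e" using e C by simp
      finally show ?thesis by (simp add: power_mult_distrib mult.commute)
    qed
    finally show "e ^ Suc p * C \<le> (sqrt (C * e) ^ Suc p)\<^sup>2" .
  qed
  finally show "(L w n (Suc p) d)\<^sup>2 \<le> ennreal ((sqrt (C * e) ^ Suc p)\<^sup>2)" .
qed

theorem lemma2: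
  fixes w :: "int \<Rightarrow> complex"
  assumes "(\<lambda>m. (cmod (w m))\<^sup>2) summable_on {m. even m}"
  shows "\<exists>\<epsilon> :: nat \<Rightarrow> real. (\<forall>n. \<epsilon> n > 0) \<and> \<epsilon> \<longlonglongrightarrow> 0 \<and>
           (\<forall>\<^sub>F n in sequentially. \<forall>s \<ge> 1.
              L w n s (int n) \<le> ennreal (\<epsilon> n ^ s) \<and>
              L w n s (- int n) \<le> ennreal (\<epsilon> n ^ s))"
proof -
  define \<eta> where "\<eta> n = max (Xf w n (int n)) (max (Xf w n (- int n)) (Df w n))" for n
  have X1: "(\<lambda>n. Xf w n (int n)) \<longlonglongrightarrow> 0" using X_lim[OF assms, of "\<lambda>n. int n"] by simp
  have X2: "(\<lambda>n. Xf w n (- int n)) \<longlonglongrightarrow> 0" using X_lim[OF assms, of "\<lambda>n. - int n"] by simp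
  have eta: "\<eta> \<longlonglongrightarrow> ennreal 0"
    using tendsto_max[OF X1 tendsto_max[OF X2 D_lim[OF assms]]] unfolding \<eta>_def by simp
  define C where "C = enn2real (2 * Zc) + 1"
  have C1: "C \<ge> 1" unfolding C_def by simp
  have YC: "Yf n \<le> ennreal C" for n
  proof -
    have "2 * Zc < \<infinity>" using Zc_finite by (simp add: ennreal_mult_less_top)
    then have "2 * Zc = ennreal (enn2real (2 * Zc))" by (simp add: ennreal_enn2real)
    also have "\<dots> \<le> ennreal C" unfolding C_def by (intro ennreal_leI) simp
    finally show ?thesis using Yf_bound[of n] by simp
  qed
  define \<epsilon> where "\<epsilon> n = sqrt (C * enn2real (\<eta> n)) + inverse (real (Suc n))" for n
  show ?thesis
  proof (intro exI[of _ \<epsilon>] conjI allI)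
    fix n show "\<epsilon> n > 0" unfolding \<epsilon>_def using C1 by (intro add_nonneg_pos) auto
  next
    have "(\<lambda>n. enn2real (\<eta> n)) \<longlonglongrightarrow> 0" by (rule tendsto_enn2real[OF eta]) simp
    then have "(\<lambda>n. sqrt (C * enn2real (\<eta> n))) \<longlonglongrightarrow> sqrt (C * 0)"
      by (intro tendsto_real_sqrt tendsto_mult_left)
    then show "\<epsilon> \<longlonglongrightarrow> 0"
      unfolding \<epsilon>_def using tendsto_add[OF _ LIMSEQ_inverse_real_of_nat] by fastforce
  next
    have ev: "eventually (\<lambda>n. \<eta> n < 1) sequentially"
      using order_tendstoD(2)[OF eta, of 1] by simp
    show "\<forall>\<^sub>F n in sequentially. \<forall>s \<ge> 1.
              L w n s (int n) \<le> ennreal (\<epsilon> n ^ s) \<and> L w n s (- int n) \<le> ennreal (\<epsilon> n ^ s)"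
      using ev
    proof eventually_elim
      case (elim n)
      define e where "e = enn2real (\<eta> n)"
      have e0: "e \<ge> 0" unfolding e_def by simp
      have "\<eta> n < top" using elim by (rule order.strict_trans) simp
      then have ee: "\<eta> n = ennreal e" unfolding e_def by simp
      have Xa: "Xf w n (int n) \<le> ennreal e" and Xb: "Xf w n (- int n) \<le> ennreal e"
        and Db: "Df w n \<le> ennreal e" unfolding ee[symmetric] \<eta>_def by (simp_all add: le_max_iff_disj)
      have se: "sqrt (C * e) \<le> \<epsilon> n" unfolding \<epsilon>_def e_def by simp
      show ?case
      proof (intro allI impI)
        fix s :: nat assume "s \<ge> 1"
        then obtain p where p: "s = Suc p" by (cases s) auto
        have pw: "ennreal (sqrt (C * e) ^ Suc p) \<le> ennreal (\<epsilon> n ^ Suc p)"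
          using se e0 C1 by (intro ennreal_leI power_mono) auto
        show "L w n s (int n) \<le> ennreal (\<epsilon> n ^ s) \<and> L w n s (- int n) \<le> ennreal (\<epsilon> n ^ s)"
          unfolding p using bound_d[OF e0 C1 Xa Db YC, of p] bound_d[OF e0 C1 Xb Db YC, of p] pw
          by (meson order_trans)
      qed
    qed
  qed
qed


end
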